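(* Let $n$ be a natural number, let $g,d$ be annotated terms, and let $M$ be a correct memo map. Write $(b,M'')=\mathrm{decideMemo}(n,g,d,M)$. Then: 1. $M''$ is a correct memo map; and 2. if $b=\mathrm{true}$, then there exists a natural number $k$ with $\mathrm{decide}(k,g,d)=\mathrm{true}$.
   Context: Terms are generated by the grammar $t ::= \mathrm{Var}(k) \mid \mathrm{Meet}(t,t) \mid \mathrm{Join}(t,t) \mid \mathrm{Not}(t)$, where $k$ ranges over positive integers. An annotated term is either $N$, $L\,t$ or $R\,t$ for a term $t$. The fuel-bounded proof-search function $\mathrm{decide}(n,g,d)\in\{\mathrm{true},\mathrm{false}\}$ is defined recursively. First, $\mathrm{decide}(0,g,d)=\mathrm{false}$. Second, $\mathrm{decide}(n+1,g,d)=\mathrm{true}$ iff at least one of the following holds, where every recursive call uses fuel $n$: - $g=L\,\mathrm{Var}(a)$ and $d=R\,\mathrm{Var}(a)$; - $\mathrm{decide}(n,g,N)$; - $d=N$ and $\mathrm{decide}(n,g,g)$; - $g=L\,\mathrm{Meet}(a,b)$ and $\mathrm{decide}(n,L\,a,d)$; - $g=L\,\mathrm{Meet}(a,b)$ and $\mathrm{decide}(n,L\,b,d)$; - $g=L\,\mathrm{Join}(a,b)$ and both $\mathrm{decide}(n,L\,a,d)$ and $\mathrm{decide}(n,L\,b,d)$; - $g=L\,\mathrm{Not}(a)$ and $\mathrm{decide}(n,R\,a,d)$; - $g=R\,\mathrm{Join}(a,b)$ and $\mathrm{decide}(n,R\,a,d)$; - $g=R\,\mathrm{Join}(a,b)$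 and $\mathrm{decide}(n,R\,b,d)$; - $g=R\,\mathrm{Meet}(a,b)$ and both $\mathrm{decide}(n,R\,a,d)$ and $\mathrm{decide}(n,R\,b,d)$; - $g=R\,\mathrm{Not}(a)$ and $\mathrm{decide}(n,L\,a,d)$; - $\mathrm{decide}(n,d,g)$. A memo map is a finite partial function $M$ from pairs of annotated terms to $\{\mathrm{true},\mathrm{false}\}$. The memo map $M$ is correct if for every pair $(g',d')$ with $M(g',d')=\mathrm{true}$ there exists $k$ with $\mathrm{decide}(k,g',d')=\mathrm{true}$. In particular, the empty map is correct. The memoized search $\mathrm{decideMemo}(n,g,d,M)$ returns a pair consisting of a boolean and a memo map, and is defined as follows. - If $M(g,d)$ is defined and equal to $b$, it returns $(b,M)$. - Otherwise it computes a pair $(b,M')$ and returns $(b,M'[(g,d)\mapsto b])$. Here $M'[(g,d)\mapsto b]$ is $M'$ updated so that $(g,d)$ is mapped to $b$. The pair $(b,M')$ is computed as follows. - If $n=0$, then $(b,M')=(\mathrm{false},M)$. - If $n=m+1$, it is obtained by evaluating the same disjunction of cases as in the definition of $\mathrm{decide}(m+1,g,d)$, in the same order. Each recursive call $\mathrm{decide}(m,g_1,d_1)$ is replaced by $\mathrm{decideMemo}(m,g_1,d_1,\cdot)$, and the memo map is threaded sequentially as follows: - A case whose pattern condition on $g,d$ fails yields $(\mathrm{false},\text{current map})$. - For a disjunction $A\vee B$: run $A$ on the current map, getting $(x,M_1)$. If $x=\mathrm{true}$, the result is $(\mathrm{true},M_1)$; otherwise the result is that of running $B$ on $M_1$. -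 For a conjunction $A\wedge B$: run $A$ on the current map, getting $(x,M_1)$. If $x=\mathrm{false}$, the result is $(\mathrm{false},M_1)$; otherwise the result is that of running $B$ on $M_1$. *)

theory Defs
  imports Main
begin

datatype tm = Var nat | Meet tm tm | Join tm tm | Not tm

datatype ann = N | L tm | R tm

fun decide :: "nat \<Rightarrow> ann \<Rightarrow> ann \<Rightarrow> bool" where
  "decide 0 g d = False"
| "decide (Suc n) g d =
     ((case (g, d) of (L (Var a), R (Var b)) \<Rightarrow> a = b | _ \<Rightarrow> False)
    \<or> decide n g N
    \<or> (d = N \<and> decide n g g)
    \<or> (case g of L (Meet a b) \<Rightarrow> decide n (L a) d | _ \<Rightarrow> False)
    \<or> (case g of L (Meet a b) \<Rightarrow> decide n (L b) d | _ \<Rightarrow> False)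
    \<or> (case g of L (Join a b) \<Rightarrow> decide n (L a) d \<and> decide n (L b) d | _ \<Rightarrow> False)
    \<or> (case g of L (Not a) \<Rightarrow> decide n (R a) d | _ \<Rightarrow> False)
    \<or> (case g of R (Join a b) \<Rightarrow> decide n (R a) d | _ \<Rightarrow> False)
    \<or> (case g of R (Join a b) \<Rightarrow> decide n (R b) d | _ \<Rightarrow> False)
    \<or> (case g of R (Meet a b) \<Rightarrow> decide n (R a) d \<and> decide n (R b) d | _ \<Rightarrow> False)
    \<or> (case g of R (Not a) \<Rightarrow> decide n (L a) d | _ \<Rightarrow> False)
    \<or> decide n d g)"

type_synonym memo = "(ann \<times> ann) \<Rightarrow> bool option"

definition memo_correct :: "memo \<Rightarrow> bool" where
  "memo_correct M \<longleftrightarrow> (\<forall>g' d'. M (g', d') = Some True \<longrightarrow> (\<exists>k. decide k g' d'))"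

definition mor :: "(memo \<Rightarrow> bool \<times> memo) \<Rightarrow> (memo \<Rightarrow> bool \<times> memo) \<Rightarrow> memo \<Rightarrow> bool \<times> memo" where
  "mor A B M = (case A M of (x, M1) \<Rightarrow> if x then (True, M1) else B M1)"

definition mand :: "(memo \<Rightarrow> bool \<times> memo) \<Rightarrow> (memo \<Rightarrow> bool \<times> memo) \<Rightarrow> memo \<Rightarrow> bool \<times> memo" where
  "mand A B M = (case A M of (x, M1) \<Rightarrow> if x then B M1 else (False, M1))"

definition mfail :: "memo \<Rightarrow> bool \<times> memo" where
  "mfail M = (False, M)"

fun decideMemo :: "nat \<Rightarrow> ann \<Rightarrow> ann \<Rightarrow> memo \<Rightarrow> bool \<times> memo" where
  "decideMemo n g d M =
    (case M (g, d) of
       Some b \<Rightarrow> (b, M)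
     | None \<Rightarrow>
        (case (case n of
              0 \<Rightarrow> (False, M)
            | Suc m \<Rightarrow>
                (mor (\<lambda>M. ((case (g, d) of (L (Var a), R (Var b)) \<Rightarrow> a = b | _ \<Rightarrow> False), M))
                (mor (decideMemo m g N)
                (mor (if d = N then decideMemo m g g else mfail)
                (mor (case g of L (Meet a b) \<Rightarrow> decideMemo m (L a) d | _ \<Rightarrow> mfail)
                (mor (case g of L (Meet a b) \<Rightarrow> decideMemo m (L b) d | _ \<Rightarrow> mfail)
                (mor (case g of L (Join a b) \<Rightarrow> mand (decideMemo m (L a) d) (decideMemo m (L b) d) | _ \<Rightarrow> mfail)
                (mor (case g of L (Not a) \<Rightarrow> decideMemo m (R a) d | _ \<Rightarrow> mfail)
                (mor (case g of R (Join a b) \<Rightarrow> decideMemo m (R a) d | _ \<Rightarrow> mfail)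
                (mor (case g of R (Join a b) \<Rightarrow> decideMemo m (R b) d | _ \<Rightarrow> mfail)
                (mor (case g of R (Meet a b) \<Rightarrow> mand (decideMemo m (R a) d) (decideMemo m (R b) d) | _ \<Rightarrow> mfail)
                (mor (case g of R (Not a) \<Rightarrow> decideMemo m (L a) d | _ \<Rightarrow> mfail)
                     (decideMemo m d g))))))))))) M)) of
           (b, M') \<Rightarrow> (b, M'((g, d) := Some b))))"

end

theory Submission
  imports Defs
begin

definition F :: "(ann \<Rightarrow> ann \<Rightarrow> bool) \<Rightarrow> ann \<Rightarrow> ann \<Rightarrow> bool" where
 "F P g d =
     ((case (g, d) of (L (Var a), R (Var b)) \<Rightarrow> a = b | _ \<Rightarrow> False)
    \<or> P g N
    \<or> (d = N \<and> P g g)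
    \<or> (case g of L (Meet a b) \<Rightarrow> P (L a) d | _ \<Rightarrow> False)
    \<or> (case g of L (Meet a b) \<Rightarrow> P (L b) d | _ \<Rightarrow> False)
    \<or> (case g of L (Join a b) \<Rightarrow> P (L a) d \<and> P (L b) d | _ \<Rightarrow> False)
    \<or> (case g of L (Not a) \<Rightarrow> P (R a) d | _ \<Rightarrow> False)
    \<or> (case g of R (Join a b) \<Rightarrow> P (R a) d | _ \<Rightarrow> False)
    \<or> (case g of R (Join a b) \<Rightarrow> P (R b) d | _ \<Rightarrow> False)
    \<or> (case g of R (Meet a b) \<Rightarrow> P (R a) d \<and> P (R b) d | _ \<Rightarrow> False)
    \<or> (case g of R (Not a) \<Rightarrow> P (L a) d | _ \<Rightarrow> False)
    \<or> P d g)"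

lemma decide_F: "decide (Suc n) g d = F (decide n) g d"
  unfolding F_def by (simp only: decide.simps)

lemma F_mono: assumes h: "\<And>x y. P x y \<Longrightarrow> Q x y" and f: "F P g d" shows "F Q g d"
  using f unfolding F_def
  apply (cases g)
    apply (simp only: ann.case prod.case; blast intro: h)
   apply (rename_tac t; case_tac t; simp only: ann.case prod.case tm.case; blast intro: h)
  apply (rename_tac t; case_tac t; simp only: ann.case prod.case tm.case; blast intro: h)
  done

lemma decide_Suc: "decide n g d \<Longrightarrow> decide (Suc n) g d"
proof (induction n arbitrary: g d)
  case 0 then show ?case by simp
next
  case (Suc n)
  have "F (decide n) g d" using Suc.prems by (simp only: decide_F[of n])
  hence "F (decide (Suc n)) g d" by (rule F_mono[rotated]) (rule Suc.IH)
  thus ?case by (simp only: decide_F[of "Suc n"])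
qed

lemma decide_mono: "decide n g d \<Longrightarrow> n \<le> m \<Longrightarrow> decide m g d"
  by (induction m) (auto simp del: decide.simps intro: decide_Suc simp: le_Suc_eq)

lemma h0: "decide (Suc 0) (L (Var a)) (R (Var a))" by (simp add: decide_F F_def)
lemma h1: "decide k g N \<Longrightarrow> decide (Suc k) g d" by (simp add: decide_F F_def)
lemma h2: "decide k g g \<Longrightarrow> decide (Suc k) g N" by (simp add: decide_F F_def)
lemma h3: "decide k (L a) d \<Longrightarrow> decide (Suc k) (L (Meet a b)) d" by (simp add: decide_F F_def)
lemma h4: "decide k (L b) d \<Longrightarrow> decide (Suc k) (L (Meet a b)) d" by (simp add: decide_F F_def)
lemma h5: "decide k (L a) d \<Longrightarrow> decide k (L b) d \<Longrightarrow> decide (Suc k) (L (Join a b)) d" by (simp add: decide_F F_def)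
lemma h6: "decide k (R a) d \<Longrightarrow> decide (Suc k) (L (Not a)) d" by (simp add: decide_F F_def)
lemma h7: "decide k (R a) d \<Longrightarrow> decide (Suc k) (R (Join a b)) d" by (simp add: decide_F F_def)
lemma h8: "decide k (R b) d \<Longrightarrow> decide (Suc k) (R (Join a b)) d" by (simp add: decide_F F_def)
lemma h9: "decide k (R a) d \<Longrightarrow> decide k (R b) d \<Longrightarrow> decide (Suc k) (R (Meet a b)) d" by (simp add: decide_F F_def)
lemma h10: "decide k (L a) d \<Longrightarrow> decide (Suc k) (R (Not a)) d" by (simp add: decide_F F_def)
lemma h11: "decide k d g \<Longrightarrow> decide (Suc k) g d" by (simp add: decide_F F_def)

declare decideMemo.simps[simp del]

definition sound :: "(memo \<Rightarrow> bool \<times> memo) \<Rightarrow> bool \<Rightarrow> bool" where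
  "sound f Q \<longleftrightarrow> (\<forall>M. memo_correct M \<longrightarrow> memo_correct (snd (f M)) \<and> (fst (f M) \<longrightarrow> Q))"

lemma sound_mor: assumes a: "sound A P" and b: "sound B Q" shows "sound (mor A B) (P \<or> Q)"
  unfolding sound_def
proof (intro allI impI)
  fix M assume M: "memo_correct M"
  obtain x M1 where e: "A M = (x, M1)" by (cases "A M")
  have "memo_correct M1" "x \<longrightarrow> P" using a M e unfolding sound_def by (metis fst_conv snd_conv)+
  moreover have "memo_correct M1 \<Longrightarrow> memo_correct (snd (B M1)) \<and> (fst (B M1) \<longrightarrow> Q)"
    using b unfolding sound_def by blast
  ultimately show "memo_correct (snd (mor A B M)) \<and> (fst (mor A B M) \<longrightarrow> P \<or> Q)"
    unfolding mor_def e by auto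
qed

lemma sound_mand: assumes a: "sound A P" and b: "sound B Q" shows "sound (mand A B) (P \<and> Q)"
  unfolding sound_def
proof (intro allI impI)
  fix M assume M: "memo_correct M"
  obtain x M1 where e: "A M = (x, M1)" by (cases "A M")
  have "memo_correct M1" "x \<longrightarrow> P" using a M e unfolding sound_def by (metis fst_conv snd_conv)+
  moreover have "memo_correct M1 \<Longrightarrow> memo_correct (snd (B M1)) \<and> (fst (B M1) \<longrightarrow> Q)"
    using b unfolding sound_def by blast
  ultimately show "memo_correct (snd (mand A B M)) \<and> (fst (mand A B M) \<longrightarrow> P \<and> Q)"
    unfolding mand_def e by auto
qed

lemma sound_mfail: "sound mfail Q"
  unfolding sound_def mfail_def by auto

lemma sound_const: "sound (\<lambda>M. (c, M)) c"
  unfolding sound_def by auto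

lemma sound_weaken: "sound f P \<Longrightarrow> (P \<Longrightarrow> Q) \<Longrightarrow> sound f Q"
  unfolding sound_def by auto

lemma memo_upd: "memo_correct M \<Longrightarrow> (b \<Longrightarrow> \<exists>k. decide k g d) \<Longrightarrow> memo_correct (M((g, d) := Some b))"
  unfolding memo_correct_def by auto

definition D where "D g d \<longleftrightarrow> (\<exists>k. decide k g d)"

lemma main: "sound (decideMemo n g d) (D g d)"
proof (induction n arbitrary: g d)
  case 0
  show ?case unfolding sound_def
    by (auto simp: memo_correct_def D_def decideMemo.simps[of 0] split: option.splits)
next
  case (Suc m)
  note IH = Suc.IH
  let ?body = "(mor (\<lambda>M. ((case (g, d) of (L (Var a), R (Var b)) \<Rightarrow> a = b | _ \<Rightarrow> False), M))
                (mor (decideMemo m g N)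
                (mor (if d = N then decideMemo m g g else mfail)
                (mor (case g of L (Meet a b) \<Rightarrow> decideMemo m (L a) d | _ \<Rightarrow> mfail)
                (mor (case g of L (Meet a b) \<Rightarrow> decideMemo m (L b) d | _ \<Rightarrow> mfail)
                (mor (case g of L (Join a b) \<Rightarrow> mand (decideMemo m (L a) d) (decideMemo m (L b) d) | _ \<Rightarrow> mfail)
                (mor (case g of L (Not a) \<Rightarrow> decideMemo m (R a) d | _ \<Rightarrow> mfail)
                (mor (case g of R (Join a b) \<Rightarrow> decideMemo m (R a) d | _ \<Rightarrow> mfail)
                (mor (case g of R (Join a b) \<Rightarrow> decideMemo m (R b) d | _ \<Rightarrow> mfail)
                (mor (case g of R (Meet a b) \<Rightarrow> mand (decideMemo m (R a) d) (decideMemo m (R b) d) | _ \<Rightarrow> mfail)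
                (mor (case g of R (Not a) \<Rightarrow> decideMemo m (L a) d | _ \<Rightarrow> mfail)
                     (decideMemo m d g))))))))))))"
  have c1: "sound (\<lambda>M. ((case (g, d) of (L (Var a), R (Var b)) \<Rightarrow> a = b | _ \<Rightarrow> False), M)) (D g d)"
    apply (rule sound_weaken[OF sound_const])
    unfolding D_def
    by (cases g; cases d; auto split: tm.splits intro: h0)
  have c2: "sound (decideMemo m g N) (D g d)"
    by (rule sound_weaken[OF IH]) (auto simp: D_def intro: h1)
  have c3: "sound (if d = N then decideMemo m g g else mfail) (D g d)"
    apply (cases "d = N")
     apply simp apply (rule sound_weaken[OF IH]) apply (auto simp: D_def intro: h2)[1]
    by (simp add: sound_mfail)
  have c4: "sound (case g of L (Meet a b) \<Rightarrow> decideMemo m (L a) d | _ \<Rightarrow> mfail) (D g d)"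
    apply (cases g; simp only: ann.case sound_mfail)
    apply (rename_tac t; case_tac t; simp only: tm.case sound_mfail)
    apply (rename_tac t; case_tac t; simp only: tm.case sound_mfail)
    apply (rule sound_weaken[OF IH], unfold D_def, blast intro: h3)+
    done
  have c5: "sound (case g of L (Meet a b) \<Rightarrow> decideMemo m (L b) d | _ \<Rightarrow> mfail) (D g d)"
    apply (cases g; simp only: ann.case sound_mfail)
    apply (rename_tac t; case_tac t; simp only: tm.case sound_mfail)
    apply (rename_tac t; case_tac t; simp only: tm.case sound_mfail)
    apply (rule sound_weaken[OF IH], unfold D_def, blast intro: h4)+
    done
  have c6: "sound (case g of L (Join a b) \<Rightarrow> mand (decideMemo m (L a) d) (decideMemo m (L b) d) | _ \<Rightarrow> mfail) (D g d)"
  proof -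
    { fix a b assume g: "g = L (Join a b)"
      have "sound (mand (decideMemo m (L a) d) (decideMemo m (L b) d)) (D g d)"
      proof (rule sound_weaken[OF sound_mand[OF IH IH]])
        assume "D (L a) d \<and> D (L b) d"
        then obtain k1 k2 where "decide k1 (L a) d" "decide k2 (L b) d" unfolding D_def by blast
        then have "decide (max k1 k2) (L a) d" "decide (max k1 k2) (L b) d"
          by (auto intro: decide_mono)
        then have "decide (Suc (max k1 k2)) g d" using g by (simp add: h5)
        then show "D g d" unfolding D_def by blast
      qed }
    then show ?thesis by (auto simp: sound_mfail split: ann.splits tm.splits)
  qed
  have c7: "sound (case g of L (Not a) \<Rightarrow> decideMemo m (R a) d | _ \<Rightarrow> mfail) (D g d)"
    apply (cases g; simp only: ann.case sound_mfail)
    apply (rename_tac t; case_tac t; simp only: tm.case sound_mfail)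
    apply (rename_tac t; case_tac t; simp only: tm.case sound_mfail)
    apply (rule sound_weaken[OF IH], unfold D_def, blast intro: h6)+
    done
  have c8: "sound (case g of R (Join a b) \<Rightarrow> decideMemo m (R a) d | _ \<Rightarrow> mfail) (D g d)"
    apply (cases g; simp only: ann.case sound_mfail)
    apply (rename_tac t; case_tac t; simp only: tm.case sound_mfail)
    apply (rename_tac t; case_tac t; simp only: tm.case sound_mfail)
    apply (rule sound_weaken[OF IH], unfold D_def, blast intro: h7)+
    done
  have c9: "sound (case g of R (Join a b) \<Rightarrow> decideMemo m (R b) d | _ \<Rightarrow> mfail) (D g d)"
    apply (cases g; simp only: ann.case sound_mfail)
    apply (rename_tac t; case_tac t; simp only: tm.case sound_mfail)
    apply (rename_tac t; case_tac t; simp only: tm.case sound_mfail)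
    apply (rule sound_weaken[OF IH], unfold D_def, blast intro: h8)+
    done
  have c10: "sound (case g of R (Meet a b) \<Rightarrow> mand (decideMemo m (R a) d) (decideMemo m (R b) d) | _ \<Rightarrow> mfail) (D g d)"
  proof -
    { fix a b assume g: "g = R (Meet a b)"
      have "sound (mand (decideMemo m (R a) d) (decideMemo m (R b) d)) (D g d)"
      proof (rule sound_weaken[OF sound_mand[OF IH IH]])
        assume "D (R a) d \<and> D (R b) d"
        then obtain k1 k2 where "decide k1 (R a) d" "decide k2 (R b) d" unfolding D_def by blast
        then have "decide (max k1 k2) (R a) d" "decide (max k1 k2) (R b) d"
          by (auto intro: decide_mono)
        then have "decide (Suc (max k1 k2)) g d" using g by (simp add: h9)
        then show "D g d" unfolding D_def by blast
      qed }
    then show ?thesis by (auto simp: sound_mfail split: ann.splits tm.splits)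
  qed
  have c11: "sound (case g of R (Not a) \<Rightarrow> decideMemo m (L a) d | _ \<Rightarrow> mfail) (D g d)"
    apply (cases g; simp only: ann.case sound_mfail)
    apply (rename_tac t; case_tac t; simp only: tm.case sound_mfail)
    apply (rename_tac t; case_tac t; simp only: tm.case sound_mfail)
    apply (rule sound_weaken[OF IH], unfold D_def, blast intro: h10)+
    done
  have c12: "sound (decideMemo m d g) (D g d)"
    by (rule sound_weaken[OF IH]) (auto simp: D_def intro: h11)
  have body: "sound ?body (D g d)"
    by (rule sound_weaken[OF sound_mor[OF c1 sound_mor[OF c2 sound_mor[OF c3 sound_mor[OF c4 sound_mor[OF c5 sound_mor[OF c6 sound_mor[OF c7 sound_mor[OF c8 sound_mor[OF c9 sound_mor[OF c10 sound_mor[OF c11 c12]]]]]]]]]]]]) blast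
  show ?case unfolding sound_def
  proof (intro allI impI)
    fix M :: memo assume M: "memo_correct M"
    show "memo_correct (snd (decideMemo (Suc m) g d M)) \<and> (fst (decideMemo (Suc m) g d M) \<longrightarrow> D g d)"
    proof (cases "M (g, d)")
      case (Some b)
      then show ?thesis using M by (auto simp: decideMemo.simps[of "Suc m"] memo_correct_def D_def)
    next
      case None
      obtain b M' where e: "?body M = (b, M')" by fastforce
      have "memo_correct M'" "b \<longrightarrow> D g d" using body M e unfolding sound_def by force+
      then show ?thesis using None e
        by (auto simp: decideMemo.simps[of "Suc m"] intro!: memo_upd simp: D_def)
    qed
  qed
qed

theorem mainTheorem3:
  fixes n :: nat and g d :: ann and M :: memo
  assumes "memo_correct M"
  shows "memo_correct (snd (decideMemo n g d M))
       \<and> (fst (decideMemo n g d M) \<longrightarrow> (\<exists>k. decide k g d))"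
  using main[of n g d] assms unfolding sound_def D_def by blast

end
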